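(* Let $k\ge 0$ and $n,m>0$ be integers and let $P\in T_{n,k,m}$. Then $$\mathrm{word}(\phi'_{n,k,m}(P))=\mathrm{flip}\circ\mathrm{rev}\circ\mathrm{sw}^-_{1,-m}\circ\mathrm{rev}\circ\mathrm{flip}(\mathrm{word}(P)).$$
   Context: Words over $\{\mathrm{N},\mathrm{E}\}$ are identified with lattice paths from $(0,0)$ (N = unit north step, E = unit east step); $\mathrm{word}(P)$ is the word of a path $P$. $\mathrm{rev}(w_1\cdots w_n)=w_n\cdots w_1$, and $\mathrm{flip}$ interchanges the letters $\mathrm{N}$ and $\mathrm{E}$. For integers $r,s$, the levels of a word $w=w_1\cdots w_n$ are $l_0=0$, $l_i=l_{i-1}+r$ if $w_i=\mathrm{N}$, $l_i=l_{i-1}+s$ if $w_i=\mathrm{E}$ (so $l_i=ry+sx$ where $(x,y)$ is the endpoint of step $i$). The sweep map $\mathrm{sw}^-_{r,s}(w)$ is obtained by: for $k=-1,-2,-3,\ldots$ and then $k=\ldots,3,2,1,0$ (all negative values in decreasing order, then all nonnegative values in decreasing order), scan $w$ from right to left and append each letter $w_i$ ($i\ge1$) with $l_i=k$. $T_{n,k,m}$ is the set of lattice paths from $(0,0)$ to $(k+mn,n)$ with unit north and east steps that never go strictly to the right of the line $x=k+my$. For $P\in T_{n,k,m}$ its area vector is $g(P)=(g_0,\ldots,g_{n-1})$, where $g_i$ is the number of complete unit lattice squares in the strip $\{(x,y):x\ge0,\ i\le y\le i+1\}$ lying to the right of $P$ and to the left of the line $x=k+my$. For each integer $i\ge 0$,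 let $z^{(i)}$ be the subsequence of $g(P)$ consisting of the entries lying in $\{i,i-1,\ldots,i-m\}$, let $M$ be the largest $i$ with $z^{(i)}$ nonempty, and let $\sigma^{(i)}\in\{\mathrm{N},\mathrm{E}\}^*$ be obtained from $z^{(i)}$ by replacing each entry equal to $i$ by $\mathrm{N}$ and every other entry by $\mathrm{E}$. For $k<i\le M$, $\sigma^{(i)}$ begins with $\mathrm{E}$; write $\sigma^{(i)}=\mathrm{E}\tilde\sigma^{(i)}$. Set $\tau^{(i)}=\mathrm{rev}(\sigma^{(i)})$ for $0\le i\le k$, $\tau^{(i)}=\mathrm{E}\,\mathrm{rev}(\tilde\sigma^{(i)})$ for $k<i\le M$, and $\tau^{(i)}$ empty for $i>M$. Define $$\tau=\tau^{(0)}\,\mathrm{E}\tau^{(1)}\,\mathrm{E}\tau^{(2)}\cdots\mathrm{E}\tau^{(k)}\,\tau^{(k+1)}\cdots\tau^{(M)}$$ (exactly $k$ inserted letters $\mathrm{E}$, preceding $\tau^{(1)},\ldots,\tau^{(k)}$), and let $\phi'_{n,k,m}(P)$ be the lattice path with word $\tau$. *)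

theory Defs
  imports Main
begin

text \<open>Letters N (unit north step) and E (unit east step); a lattice path from (0,0)
  is identified with its word.\<close>
datatype step = N | E

definition flip :: "step list \<Rightarrow> step list" where
  "flip w = map (\<lambda>c. if c = N then E else N) w"

definition cntN :: "step list \<Rightarrow> nat" where
  "cntN w = length (filter (\<lambda>c. c = N) w)"

definition cntE :: "step list \<Rightarrow> nat" where
  "cntE w = length (filter (\<lambda>c. c = E) w)"

definition level :: "int \<Rightarrow> int \<Rightarrow> step list \<Rightarrow> nat \<Rightarrow> int" where
  "level r s w i = r * int (cntN (take i w)) + s * int (cntE (take i w))"

definition letters_at :: "int \<Rightarrow> int \<Rightarrow> step list \<Rightarrow> int \<Rightarrow> step list" where
  "letters_at r s w lv = rev [w ! j. j \<leftarrow> [0..<length w], level r s w (j + 1) = lv]"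

text \<open>Sweep map sw^-_{r,s}: levels -1,-2,-3,... and then ...,2,1,0.  All levels lie in
  [-B, B] with B = length w * (|r|+|s|); levels outside the actual range contribute nothing.\<close>
definition sweep_minus :: "int \<Rightarrow> int \<Rightarrow> step list \<Rightarrow> step list" where
  "sweep_minus r s w =
     (let B = int (length w) * (\<bar>r\<bar> + \<bar>s\<bar>) in
      concat (map (letters_at r s w) (rev [-B..-1] @ rev [0..B])))"

definition T :: "nat \<Rightarrow> nat \<Rightarrow> nat \<Rightarrow> step list set" where
  "T n k m = {w. cntN w = n \<and> cntE w = k + m * n \<and>
      (\<forall>i \<le> length w. cntE (take i w) \<le> k + m * cntN (take i w))}"

text \<open>Position (0-based) in w of the (i+1)-st north step.\<close>
definition posN :: "step list \<Rightarrow> nat \<Rightarrow> nat" where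
  "posN w i = [j \<leftarrow> [0..<length w]. w ! j = N] ! i"

text \<open>Area vector: g_i = (k + m i) - (x-coordinate of the (i+1)-st north step), the number of
  full unit squares in the strip i \<le> y \<le> i+1 between the path and the line x = k + m y.\<close>
definition area_vec :: "nat \<Rightarrow> nat \<Rightarrow> nat \<Rightarrow> step list \<Rightarrow> int list" where
  "area_vec n k m w = [int k + int m * int i - int (cntE (take (posN w i) w)). i \<leftarrow> [0..<n]]"

definition zseq :: "nat \<Rightarrow> int list \<Rightarrow> nat \<Rightarrow> int list" where
  "zseq m g i = filter (\<lambda>x. int i - int m \<le> x \<and> x \<le> int i) g"

definition sigma :: "nat \<Rightarrow> int list \<Rightarrow> nat \<Rightarrow> step list" where
  "sigma m g i = map (\<lambda>x. if x = int i then N else E) (zseq m g i)"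

definition Mtop :: "nat \<Rightarrow> int list \<Rightarrow> nat" where
  "Mtop m g = Max {i. zseq m g i \<noteq> []}"

text \<open>tau^(i); for k < i \<le> M, sigma^(i) = E sigma~^(i), i.e. sigma~^(i) = tl sigma^(i).\<close>
definition tau :: "nat \<Rightarrow> nat \<Rightarrow> int list \<Rightarrow> nat \<Rightarrow> step list" where
  "tau k m g i =
     (if i \<le> k then rev (sigma m g i)
      else if i \<le> Mtop m g then E # rev (tl (sigma m g i))
      else [])"

definition phi' :: "nat \<Rightarrow> nat \<Rightarrow> nat \<Rightarrow> step list \<Rightarrow> step list" where
  "phi' n k m w =
     (let g = area_vec n k m w in
        tau k m g 0
        @ concat (map (\<lambda>i. E # tau k m g i) [1..<k + 1])
        @ concat (map (\<lambda>i. tau k m g i) [k + 1..<Mtop m g + 1]))"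

end

theory Submission
  imports Defs
begin

fun stp :: "nat \<Rightarrow> step \<Rightarrow> int \<Rightarrow> int" where
  "stp m c h = (if c = N then h + int m else h - 1)"
fun hs :: "nat \<Rightarrow> step list \<Rightarrow> int \<Rightarrow> int list" where
  "hs m [] h = []" | "hs m (c#w) h = h # hs m w (stp m c h)"
fun endh :: "nat \<Rightarrow> step list \<Rightarrow> int \<Rightarrow> int" where
  "endh m [] h = h" | "endh m (c#w) h = endh m w (stp m c h)"
definition Fl :: "nat \<Rightarrow> step list \<Rightarrow> int \<Rightarrow> int \<Rightarrow> step list" where
  "Fl m w h lv = map fst (filter (\<lambda>p. snd p = lv) (zip w (hs m w h)))"
definition Nh :: "nat \<Rightarrow> step list \<Rightarrow> int \<Rightarrow> int list" where
  "Nh m w h = map snd (filter (\<lambda>p. fst p = N) (zip w (hs m w h)))"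
definition Gl :: "nat \<Rightarrow> step list \<Rightarrow> int \<Rightarrow> int \<Rightarrow> step list" where
  "Gl m w h lv = map (\<lambda>x. if x = lv then N else E) (filter (\<lambda>x. lv - int m \<le> x \<and> x \<le> lv) (Nh m w h))"

lemma core:
  "(if h < lv then E # Fl m w h lv else Fl m w h lv)
   = (if endh m w h < lv then Gl m w h lv @ [E] else Gl m w h lv)"
proof (induction w arbitrary: h)
  case Nil
  then show ?case by (simp add: Fl_def Gl_def Nh_def)
next
  case (Cons c w)
  have F: "Fl m (c#w) h lv = (if h = lv then [c] else []) @ Fl m w (stp m c h) lv"
    by (simp add: Fl_def)
  have G: "Gl m (c#w) h lv = (if c = N \<and> lv - int m \<le> h \<and> h \<le> lv then [if h = lv then N else E] else [])
            @ Gl m w (stp m c h) lv"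
    by (simp add: Gl_def Nh_def)
  note IH = Cons.IH[of "stp m c h"]
  show ?case
    using IH unfolding F G by (cases c) (auto split: if_splits)
qed

lemma Nh_Nil[simp]: "Nh m [] h = []" by (simp add: Nh_def)
lemma Nh_Cons[simp]: "Nh m (c#w) h = (if c = N then [h] else []) @ Nh m w (stp m c h)"
  by (simp add: Nh_def)

lemma Nh_empty:
  "h < lv \<Longrightarrow> filter (\<lambda>x. lv - int m \<le> x \<and> x \<le> lv) (Nh m w h) = [] \<Longrightarrow> \<forall>x\<in>set (Nh m w h). x < lv - int m"
proof (induction w arbitrary: h)
  case Nil then show ?case by simp
next
  case (Cons c w)
  show ?case
  proof (cases c)
    case N
    then have "h < lv - int m" using Cons.prems by (auto split: if_splits)
    then show ?thesis using Cons.IH[of "h + int m"] Cons.prems N by auto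
  next
    case E
    then show ?thesis using Cons.IH[of "h - 1"] Cons.prems by auto
  qed
qed

lemma hs_nth: "t < length w \<Longrightarrow> hs m w h ! t = h + int m * int (cntN (take t w)) - int (cntE (take t w))"
proof (induction w arbitrary: h t)
  case Nil then show ?case by simp
next
  case (Cons c w)
  then show ?case by (cases t; cases c) (auto simp: cntN_def cntE_def algebra_simps)
qed

lemma length_hs[simp]: "length (hs m w h) = length w"
  by (induction w arbitrary: h) auto

lemma endh_eq: "endh m w h = h + int m * int (cntN w) - int (cntE w)"
proof (induction w arbitrary: h)
  case (Cons c w) then show ?case by (cases c) (auto simp: cntN_def cntE_def algebra_simps)
qed (simp add: cntN_def cntE_def)

lemma zip_nth_map: "length ys = length xs \<Longrightarrow> zip xs ys = map (\<lambda>t. (xs!t, ys!t)) [0..<length xs]"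
  by (rule nth_equalityI) auto

lemma Fl_idx: "Fl m w h lv = map (nth w) (filter (\<lambda>t. hs m w h ! t = lv) [0..<length w])"
  unfolding Fl_def by (simp add: zip_nth_map filter_map o_def)

lemma Nh_idx: "Nh m w h = map (nth (hs m w h)) (filter (\<lambda>t. w ! t = N) [0..<length w])"
  unfolding Nh_def by (simp add: zip_nth_map filter_map o_def)

definition ps :: "step list \<Rightarrow> nat list" where
  "ps w = filter (\<lambda>j. w ! j = N) [0..<length w]"

lemma ps_snoc: "ps (w @ [c]) = ps w @ (if c = N then [length w] else [])"
proof -
  have "filter (\<lambda>j. (w @ [c]) ! j = N) [0..<length w] = filter (\<lambda>j. w ! j = N) [0..<length w]"
    by (rule filter_cong) (auto simp: nth_append)
  then show ?thesis by (simp add: ps_def)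
qed

lemma ps_props: "length (ps w) = cntN w \<and> (\<forall>i < cntN w. ps w ! i < length w \<and> cntN (take (ps w ! i) w) = i)"
proof (induction w rule: rev_induct)
  case Nil then show ?case by (simp add: ps_def cntN_def)
next
  case (snoc c w)
  have len: "length (ps (w@[c])) = cntN (w@[c])"
    using snoc by (simp add: ps_snoc cntN_def)
  have "ps (w@[c]) ! i < length (w@[c]) \<and> cntN (take (ps (w@[c]) ! i) (w@[c])) = i" if i: "i < cntN (w@[c])" for i
  proof (cases "i < cntN w")
    case True
    then have "ps (w@[c]) ! i = ps w ! i" using snoc by (simp add: ps_snoc nth_append)
    moreover have "ps w ! i < length w" "cntN (take (ps w ! i) w) = i" using snoc True by auto
    ultimately show ?thesis by simp
  next
    case False
    then have "c = N" "i = cntN w" using i by (auto simp: cntN_def split: if_splits)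
    then have "ps (w@[c]) ! i = length w" using snoc by (simp add: ps_snoc nth_append)
    then show ?thesis using \<open>i = cntN w\<close> by simp
  qed
  then show ?case using len by blast
qed

lemma cnt_take_drop: "cntN (take t w) + cntN (drop t w) = cntN w" "cntE (take t w) + cntE (drop t w) = cntE w"
proof -
  have "w = take t w @ drop t w" by simp
  then show "cntN (take t w) + cntN (drop t w) = cntN w" "cntE (take t w) + cntE (drop t w) = cntE w"
    unfolding cntN_def cntE_def by (metis filter_append length_append)+
qed

definition fl1 :: "step \<Rightarrow> step" where "fl1 c = (if c = N then E else N)"

lemma flip_map: "flip w = map fl1 w" by (simp add: flip_def fl1_def)
lemma fl1_fl1[simp]: "fl1 (fl1 c) = c" by (cases c) (auto simp: fl1_def)

lemma cntN_rev_flip: "cntN (rev (map fl1 w)) = cntE w" "cntE (rev (map fl1 w)) = cntN w"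
proof -
  have a: "(\<lambda>c. c = N) \<circ> fl1 = (\<lambda>c. c = E)" "(\<lambda>c. c = E) \<circ> fl1 = (\<lambda>c. c = N)"
    by (auto simp: fun_eq_iff fl1_def) (metis step.exhaust)+
  show "cntN (rev (map fl1 w)) = cntE w" "cntE (rev (map fl1 w)) = cntN w"
    unfolding cntN_def cntE_def rev_filter[symmetric] filter_map by (simp_all add: a)
qed

lemma rev_reindex:
  "rev (map (\<lambda>j. f (L - 1 - j)) (filter (\<lambda>j. p (L - 1 - j)) [0..<L])) = map f (filter p [0..<L])"
proof -
  have r: "map (\<lambda>j. L - 1 - j) [0..<L] = rev [0..<L]"
    by (rule nth_equalityI) (auto simp: rev_nth)
  have "map (\<lambda>j. f (L - 1 - j)) (filter (\<lambda>j. p (L - 1 - j)) [0..<L])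
      = map f (filter p (map (\<lambda>j. L - 1 - j) [0..<L]))"
    by (simp add: filter_map o_def)
  also have "\<dots> = rev (map f (filter p [0..<L]))" unfolding r by (simp add: rev_filter[symmetric] rev_map)
  finally show ?thesis by simp
qed

lemma lc: "concat (map (\<lambda>x. if p x then [f x] else []) xs) = map f (filter p xs)"
  by (induction xs) auto

lemma letters_at_eq:
  assumes "cntN P = n" "cntE P = k + m * n"
  shows "letters_at 1 (- int m) (rev (flip P)) lv = map fl1 (Fl m P (int k) lv)"
proof -
  let ?L = "length P"
  let ?v = "rev (flip P)"
  have v: "?v ! j = fl1 (P ! (?L - 1 - j))" if "j < ?L" for j
    using that by (simp add: rev_nth flip_map)
  have lev: "level 1 (- int m) ?v (j + 1) = hs m P (int k) ! (?L - 1 - j)" if j: "j < ?L" for j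
  proof -
    let ?t = "?L - 1 - j"
    have tk: "take (j+1) ?v = rev (map fl1 (drop ?t P))"
      using j by (simp add: take_rev flip_map drop_map)
    have "level 1 (- int m) ?v (j + 1) = int (cntE (drop ?t P)) - int m * int (cntN (drop ?t P))"
      unfolding level_def tk cntN_rev_flip by simp
    also have "\<dots> = int k + int m * int (cntN (take ?t P)) - int (cntE (take ?t P))"
    proof -
      have e1: "int (cntN (drop ?t P)) + int (cntN (take ?t P)) = int n"
        using cnt_take_drop(1)[of ?t P] assms by (metis add.commute of_nat_add)
      have e2: "int (cntE (drop ?t P)) + int (cntE (take ?t P)) = int k + int m * int n"
        using cnt_take_drop(2)[of ?t P] assms by (metis add.commute of_nat_add of_nat_mult)
      have e3: "int m * int (cntN (drop ?t P)) + int m * int (cntN (take ?t P)) = int m * int n"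
        using e1 by (metis distrib_left)
      show ?thesis using e2 e3 by linarith
    qed
    also have "\<dots> = hs m P (int k) ! ?t" using j by (simp add: hs_nth)
    finally show ?thesis .
  qed
  have "letters_at 1 (- int m) ?v lv
     = rev (map (\<lambda>j. fl1 (P ! (?L - 1 - j))) (filter (\<lambda>j. hs m P (int k) ! (?L - 1 - j) = lv) [0..<?L]))"
  proof -
    have "letters_at 1 (- int m) ?v lv = rev (map (nth ?v) (filter (\<lambda>j. level 1 (- int m) ?v (j + 1) = lv) [0..<?L]))"
      unfolding letters_at_def by (simp add: lc flip_map)
    also have "filter (\<lambda>j. level 1 (- int m) ?v (j + 1) = lv) [0..<?L] = filter (\<lambda>j. hs m P (int k) ! (?L - 1 - j) = lv) [0..<?L]"
      by (rule filter_cong) (use lev in auto)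
    also have "map (nth ?v) (filter (\<lambda>j. hs m P (int k) ! (?L - 1 - j) = lv) [0..<?L]) = map (\<lambda>j. fl1 (P ! (?L - 1 - j))) (filter (\<lambda>j. hs m P (int k) ! (?L - 1 - j) = lv) [0..<?L])"
      by (rule map_cong) (auto simp: v)
    finally show ?thesis .
  qed
  also have "\<dots> = map (\<lambda>t. fl1 (P ! t)) (filter (\<lambda>t. hs m P (int k) ! t = lv) [0..<?L])"
    by (rule rev_reindex)
  finally show ?thesis by (simp add: Fl_idx)
qed

lemma length_cnt: "length w = cntN w + cntE w"
proof (induction w)
  case (Cons c w) then show ?case by (cases c) (auto simp: cntN_def cntE_def)
qed (simp add: cntN_def cntE_def)

lemma area_vec_Nh:
  assumes "cntN P = n"
  shows "area_vec n k m P = Nh m P (int k)"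
proof -
  have lp: "length (ps P) = n" using ps_props[of P] assms by simp
  have "area_vec n k m P = map (\<lambda>i. hs m P (int k) ! (ps P ! i)) [0..<n]"
    unfolding area_vec_def
  proof (rule map_cong)
    fix i assume "i \<in> set [0..<n]"
    then have i: "i < cntN P" using assms by simp
    then have "ps P ! i < length P" "cntN (take (ps P ! i) P) = i" using ps_props[of P] by auto
    then show "int k + int m * int i - int (cntE (take (posN P i) P)) = hs m P (int k) ! (ps P ! i)"
      by (simp add: hs_nth posN_def ps_def[symmetric])
  qed simp
  also have "\<dots> = map (nth (hs m P (int k))) (map (nth (ps P)) [0..<length (ps P)])"
    using lp by simp
  also have "\<dots> = map (nth (hs m P (int k))) (ps P)" by (simp only: map_nth)
  finally show ?thesis by (simp add: Nh_idx ps_def)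
qed

lemma flip_rev_concat:
  "flip (rev (concat (map (\<lambda>lv. map fl1 (f lv)) (rev xs)))) = concat (map (\<lambda>lv. rev (f lv)) xs)"
  by (induction xs) (auto simp: flip_map rev_map o_def)

lemma upto_nat: "[0..int n] = map int [0..<Suc n]"
proof (induction n)
  case 0 then show ?case by (simp add: upto.simps)
next
  case (Suc n)
  have "[0..int (Suc n)] = [0..int n] @ [int (Suc n)]"
    using upto_rec2[of 0 "int (Suc n)"] by simp
  then show ?case using Suc by simp
qed

lemma upt_split: "a \<le> b \<Longrightarrow> b \<le> c \<Longrightarrow> [a..<c] = [a..<b] @ [b..<c]"
  using upt_add_eq_append[of a b "c - b"] by simp

theorem mainTheorem2:
  fixes n k m :: nat and P :: "step list"
  assumes "n > 0" and "m > 0" and "P \<in> T n k m"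
  shows "phi' n k m P = flip (rev (sweep_minus 1 (- int m) (rev (flip P))))"
proof -
  have cN: "cntN P = n" and cE: "cntE P = k + m * n"
    and bnd: "\<And>i. i \<le> length P \<Longrightarrow> cntE (take i P) \<le> k + m * cntN (take i P)"
    using assms(3) by (auto simp: T_def)
  define L where "L = length P"
  have L: "L = n + (k + m * n)" using length_cnt[of P] cN cE by (simp add: L_def)
  define H where "H = hs m P (int k)"
  define g where "g = area_vec n k m P"
  define Bn where "Bn = L * (1 + m)"
  define M where "M = Mtop m g"
  define F where "F = (\<lambda>lv. Fl m P (int k) lv)"
  have gN: "g = Nh m P (int k)" using area_vec_Nh[OF cN] by (simp add: g_def)
  have endh0: "endh m P (int k) = 0" using cN cE by (simp add: endh_eq)
  have Hb: "0 \<le> x \<and> x \<le> int L" if xH: "x \<in> set H" for x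
  proof -
    obtain t where t: "t < L" "x = H ! t" using xH unfolding in_set_conv_nth H_def L_def by auto
    have x: "x = int k + int m * int (cntN (take t P)) - int (cntE (take t P))"
      using t by (simp add: H_def hs_nth L_def)
    have "cntE (take t P) \<le> k + m * cntN (take t P)" using bnd t by (simp add: L_def)
    then have "int (cntE (take t P)) \<le> int k + int m * int (cntN (take t P))"
      by (metis of_nat_add of_nat_le_iff of_nat_mult)
    moreover have "cntN (take t P) \<le> n" using cnt_take_drop(1)[of t P] cN by simp
    then have "int m * int (cntN (take t P)) \<le> int m * int n" by (simp add: mult_left_mono)
    ultimately show ?thesis using x L by simp
  qed
  have gH: "set g \<subseteq> set H" unfolding gN Nh_def H_def by (auto dest: set_zip_rightD)
  have sig: "sigma m g i = Gl m P (int k) (int i)" for i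
    unfolding sigma_def zseq_def Gl_def gN ..
  have Fneg: "F lv = []" if "lv < 0" for lv
  proof -
    have "filter (\<lambda>t. H ! t = lv) [0..<L] = []"
    proof (rule filter_False, intro ballI)
      fix t assume "t \<in> set [0..<L]"
      then have "H ! t \<in> set H" by (simp add: H_def L_def)
      then show "H ! t \<noteq> lv" using Hb that by fastforce
    qed
    then show ?thesis by (simp add: F_def Fl_idx H_def L_def)
  qed
  have lv: "letters_at 1 (- int m) (rev (flip P)) lv = map fl1 (F lv)" for lv
    using letters_at_eq[OF cN cE] by (simp add: F_def)
  have B: "int (length (rev (flip P))) * (\<bar>1\<bar> + \<bar>- int m\<bar>) = int Bn"
    by (simp add: flip_def Bn_def L_def algebra_simps)
  have "sweep_minus 1 (- int m) (rev (flip P)) = concat (map (\<lambda>lv. map fl1 (F lv)) (rev [0..int Bn]))"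
    unfolding sweep_minus_def Let_def B lv using Fneg by simp
  then have RHS: "flip (rev (sweep_minus 1 (- int m) (rev (flip P)))) = concat (map (\<lambda>i. rev (F (int i))) [0..<Bn + 1])"
    by (simp only: upto_nat flip_rev_concat) (simp add: o_def)
  define S where "S = {i. zseq m g i \<noteq> []}"
  have Ssub: "S \<subseteq> {..L + m}"
  proof
    fix i assume "i \<in> S"
    then obtain x where "x \<in> set g" "int i - int m \<le> x" "x \<le> int i" by (auto simp: S_def zseq_def filter_empty_conv)
    then have "x \<le> int L" using gH Hb by auto
    then show "i \<in> {..L + m}" using \<open>int i - int m \<le> x\<close> by simp
  qed
  have finS: "finite S" using Ssub finite_subset by blast
  have "g \<noteq> []" using assms(1) by (simp add: g_def area_vec_def)
  then obtain x0 where x0: "x0 \<in> set g" by (cases g) auto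
  then have "0 \<le> x0" using gH Hb by auto
  then have "\<exists>x\<in>set g. int (nat x0) - int m \<le> x \<and> x \<le> int (nat x0)" using x0 by (intro bexI[of _ x0]) auto
  then have "nat x0 \<in> S" unfolding S_def zseq_def filter_empty_conv by blast
  then have SnE: "S \<noteq> {}" by auto
  have MS: "M \<in> S" using Max_in[OF finS SnE] by (simp add: M_def Mtop_def S_def)
  have SM: "i \<le> M" if "i \<in> S" for i using Max_ge[OF finS that] by (simp add: M_def Mtop_def S_def)
  have L1: "L \<ge> 1" using L assms(1) by simp
  have "M \<le> L + m" using MS Ssub by auto
  moreover have "m \<le> L * m" using L1 by (metis mult_1 mult_le_mono1)
  moreover have "Bn = L + L * m" by (simp add: Bn_def algebra_simps)
  ultimately have MB: "M \<le> Bn" by linarith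
  have kB: "k \<le> Bn" using L by (simp add: Bn_def)
  have core': "(if int k < lv then E # F lv else F lv) = (if 0 < lv then Gl m P (int k) lv @ [E] else Gl m P (int k) lv)" for lv
    using core[of "int k" lv m P] endh0 by (auto simp: F_def split: if_splits)
  have lvl0: "rev (F 0) = tau k m g 0"
    using core'[of 0] by (simp add: tau_def sig)
  have lvlmid: "rev (F (int i)) = E # tau k m g i" if "1 \<le> i" "i \<le> k" for i
    using core'[of "int i"] that by (simp add: tau_def sig)
  have lvlhi: "rev (F (int i)) = tau k m g i" if "k < i" for i
  proof (cases "i \<le> M")
    case True
    have c: "E # F (int i) = Gl m P (int k) (int i) @ [E]" using core'[of "int i"] that by simp
    have "Gl m P (int k) (int i) \<noteq> []"
    proof
      assume "Gl m P (int k) (int i) = []"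
      then have "filter (\<lambda>x. int i - int m \<le> x \<and> x \<le> int i) (Nh m P (int k)) = []" by (simp add: Gl_def)
      then have all: "\<forall>x\<in>set g. x < int i - int m" using Nh_empty[of "int k" "int i" m P] that gN by simp
      from MS obtain x where "x \<in> set g" "int M - int m \<le> x" by (auto simp: S_def zseq_def filter_empty_conv)
      then show False using all True by force
    qed
    then obtain c rest where cr: "Gl m P (int k) (int i) = c # rest" by (cases "Gl m P (int k) (int i)") auto
    then have "F (int i) = rest @ [E]" using c by (cases rest) auto
    then show ?thesis using that True cr by (simp add: tau_def sig M_def)
  next
    case False
    then have "i \<notin> S" using SM by auto
    then have "Gl m P (int k) (int i) = []" using sig[of i] by (simp add: S_def sigma_def)
    then have "F (int i) = []" using core'[of "int i"] that by simp
    then show ?thesis using that False by (simp add: tau_def M_def)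
  qed
  have split: "[0..<Bn + 1] = [0] @ [1..<k + 1] @ [k + 1..<Bn + 1]"
    using upt_split[of 0 1 "Bn+1"] upt_split[of 1 "k+1" "Bn+1"] kB by simp
  have hi: "concat (map (\<lambda>i. rev (F (int i))) [k + 1..<Bn + 1]) = concat (map (tau k m g) [k + 1..<M + 1])"
  proof -
    have "concat (map (\<lambda>i. rev (F (int i))) [k + 1..<Bn + 1]) = concat (map (tau k m g) [k + 1..<Bn + 1])"
      by (rule arg_cong[where f=concat], rule map_cong) (auto simp: lvlhi)
    also have "\<dots> = concat (map (tau k m g) [k + 1..<M + 1])"
    proof (cases "k \<le> M")
      case True
      then have "[k + 1..<Bn + 1] = [k + 1..<M + 1] @ [M + 1..<Bn + 1]" using upt_split[of "k+1" "M+1" "Bn+1"] MB True by simp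
      moreover have "\<forall>i\<in>set [M + 1..<Bn + 1]. tau k m g i = []" using True by (auto simp: tau_def M_def)
      ultimately show ?thesis by simp
    next
      case False
      then have "\<forall>i\<in>set [k + 1..<Bn + 1]. tau k m g i = []" by (auto simp: tau_def M_def)
      then show ?thesis using False by simp
    qed
    finally show ?thesis .
  qed
  have mid: "concat (map (\<lambda>i. rev (F (int i))) [1..<k + 1]) = concat (map (\<lambda>i. E # tau k m g i) [1..<k + 1])"
    by (rule arg_cong[where f=concat], rule map_cong) (simp, rule lvlmid, auto)
  show ?thesis
    unfolding RHS split phi'_def Let_def g_def[symmetric] M_def[symmetric]
    by (simp only: map_append concat_append hi mid list.map concat.simps append_Nil2 lvl0 append.simps of_nat_0)
qed

end
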